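(* Let $k\ge2$, $\ell\ge1$, and let $Z'_k(\ell)$ be the sequence $\mathrm{rev}_{k,\ell}(0),\mathrm{rev}_{k,\ell}(1),\dots,\mathrm{rev}_{k,\ell}(k^\ell-1)$. (1) If $b_1,\dots,b_d$ is a palindromic sequence of integers in $\{0,\dots,k^\ell-1\}$ that is strictly decreasing, then $b_1,\dots,b_d$ is a subsequence of $Z'_k(\ell)$ (its terms appear in $Z'_k(\ell)$ in this order). (2) Conversely, if a subsequence of $Z'_k(\ell)$ is palindromic, then it is strictly decreasing.
   Context: For integers $k\ge2$, $\ell\ge1$ and $0\le x<k^\ell$, write $x$ in base $k$ as a string of exactly $\ell$ digits (padding with leading zeros); $\mathrm{rev}_{k,\ell}(x)$ is the integer whose $\ell$-digit base-$k$ string is the reversal of that of $x$. A sequence $b_1,\dots,b_d$ of integers in $\{0,\dots,k^\ell-1\}$ is palindromic (with respect to $k$ and $\ell$) if $\mathrm{rev}_{k,\ell}(b_i)=b_{d+1-i}$ for all $i\in\{1,\dots,d\}$. $Z'_k(\ell)$ is the stable configuration $Z_k(\ell)$ of labeled chip-firing (with $1$ subtracted from each entry), which equals the radix-$k$ digit-reversal permutation. *)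

theory Defs
  imports Main "HOL-Library.Sublist"
begin

definition digit :: "nat \<Rightarrow> nat \<Rightarrow> nat \<Rightarrow> nat" where
  "digit k i x = x div k ^ i mod k"

text \<open>rev_{k,l}(x): reverse the l-digit base-k representation of x (leading zeros padded).\<close>
definition rev_digits :: "nat \<Rightarrow> nat \<Rightarrow> nat \<Rightarrow> nat" where
  "rev_digits k l x = (\<Sum>i<l. digit k i x * k ^ (l - 1 - i))"

definition Zprime :: "nat \<Rightarrow> nat \<Rightarrow> nat list" where
  "Zprime k l = map (rev_digits k l) [0..<k ^ l]"

definition palindromic :: "nat \<Rightarrow> nat \<Rightarrow> nat list \<Rightarrow> bool" where
  "palindromic k l bs \<longleftrightarrow> (\<forall>b\<in>set bs. b < k ^ l) \<and>
     (\<forall>i<length bs. rev_digits k l (bs ! i) = bs ! (length bs - 1 - i))"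

definition strictly_decreasing :: "nat list \<Rightarrow> bool" where
  "strictly_decreasing bs \<longleftrightarrow> sorted_wrt (>) bs"

end

theory Submission
  imports Defs
begin

lemma sum_shift_k:
  "(\<Sum>i<Suc l. c i * (k::nat) ^ i) = c 0 + k * (\<Sum>i<l. c (Suc i) * k ^ i)"
  unfolding sum.lessThan_Suc_shift by (simp add: sum_distrib_left mult.assoc mult.left_commute)

lemma digit_sum:
  assumes "\<forall>i<l. c i < k" "j < l"
  shows "digit k j (\<Sum>i<l. c i * k ^ i) = c j"
  using assms
proof (induction l arbitrary: c j)
  case 0 then show ?case by simp
next
  case (Suc l)
  have c0: "c 0 < k" using Suc.prems by auto
  show ?case
  proof (cases j)
    case 0
    then show ?thesis using c0 unfolding sum_shift_k by (simp add: digit_def)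
  next
    case (Suc j')
    have k0: "k > 0" using c0 by simp
    have "digit k j (\<Sum>i<Suc l. c i * k ^ i)
        = (c 0 + k * (\<Sum>i<l. c (Suc i) * k ^ i)) div k div k ^ j' mod k"
      unfolding sum_shift_k by (simp add: digit_def Suc div_mult2_eq mult.commute)
    also have "(c 0 + k * (\<Sum>i<l. c (Suc i) * k ^ i)) div k = (\<Sum>i<l. c (Suc i) * k ^ i)"
      using c0 by simp
    also have "(\<Sum>i<l. c (Suc i) * k ^ i) div k ^ j' mod k = c (Suc j')"
      using Suc.IH[of "\<lambda>i. c (Suc i)" j'] Suc.prems \<open>j = Suc j'\<close> by (simp add: digit_def)
    finally show ?thesis using Suc by simp
  qed
qed

lemma sum_bound:
  assumes "\<forall>i<l. c i < k"
  shows "(\<Sum>i<l. c i * (k::nat) ^ i) < k ^ l"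
  using assms
proof (induction l arbitrary: c)
  case 0 then show ?case by simp
next
  case (Suc l)
  have c0: "c 0 < k" using Suc.prems by auto
  have T: "(\<Sum>i<l. c (Suc i) * k ^ i) < k ^ l" using Suc.IH[of "\<lambda>i. c (Suc i)"] Suc.prems by auto
  have "c 0 + k * (\<Sum>i<l. c (Suc i) * k ^ i) < k + k * (\<Sum>i<l. c (Suc i) * k ^ i)" using c0 by simp
  also have "\<dots> = k * (Suc (\<Sum>i<l. c (Suc i) * k ^ i))" by simp
  also have "\<dots> \<le> k * k ^ l" using T by (intro mult_le_mono2) simp
  finally show ?case unfolding sum_shift_k by simp
qed

lemma expand:
  assumes "(x::nat) < k ^ l"
  shows "x = (\<Sum>i<l. digit k i x * k ^ i)"
  using assms
proof (induction l arbitrary: x)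
  case 0 then show ?case by simp
next
  case (Suc l)
  have "x div k < k ^ l" using Suc.prems
    by (metis less_mult_imp_div_less mult.commute power_Suc)
  then have IH: "x div k = (\<Sum>i<l. digit k i (x div k) * k ^ i)" using Suc.IH by blast
  have d: "digit k (Suc i) x = digit k i (x div k)" for i
    by (simp add: digit_def div_mult2_eq)
  have "(\<Sum>i<Suc l. digit k i x * k ^ i) = x mod k + k * (x div k)"
    unfolding sum_shift_k d IH[symmetric] by (simp add: digit_def)
  then show ?case by simp
qed

lemma rev_alt:
  "rev_digits k l x = (\<Sum>i<l. digit k (l - 1 - i) x * k ^ i)"
  unfolding rev_digits_def
  by (rule sum.reindex_bij_witness[where i="\<lambda>i. l - 1 - i" and j="\<lambda>i. l - 1 - i"]) auto

lemma digit_lt: "k > 0 \<Longrightarrow> digit k i x < k"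
  by (simp add: digit_def)

lemma rev_lt: "k > 0 \<Longrightarrow> rev_digits k l x < k ^ l"
  unfolding rev_alt by (rule sum_bound) (simp add: digit_lt)

lemma rev_rev:
  assumes "k > 0" "x < k ^ l"
  shows "rev_digits k l (rev_digits k l x) = x"
proof -
  have "rev_digits k l (rev_digits k l x) = (\<Sum>i<l. digit k (l - 1 - i) (rev_digits k l x) * k ^ i)"
    by (rule rev_alt)
  also have "\<dots> = (\<Sum>i<l. digit k i x * k ^ i)"
  proof (rule sum.cong[OF refl])
    fix i assume "i \<in> {..<l}"
    then have "digit k (l - 1 - i) (rev_digits k l x) = digit k (l - 1 - (l - 1 - i)) x"
      unfolding rev_alt by (subst digit_sum) (auto simp: digit_lt assms)
    also have "l - 1 - (l - 1 - i) = i" using \<open>i \<in> {..<l}\<close> by auto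
    finally show "digit k (l - 1 - i) (rev_digits k l x) * k ^ i = digit k i x * k ^ i" by simp
  qed
  also have "\<dots> = x" using expand[OF assms(2)] by simp
  finally show ?thesis .
qed

lemma subseq_map_inv:
  "subseq bs (map f ys) \<Longrightarrow> \<exists>zs. subseq zs ys \<and> bs = map f zs"
proof (induction ys arbitrary: bs)
  case Nil then show ?case by auto
next
  case (Cons y ys)
  show ?case
  proof (cases bs)
    case Nil then show ?thesis by auto
  next
    case (Cons b bs')
    show ?thesis
    proof (cases "b = f y \<and> subseq bs' (map f ys)")
      case True
      then obtain zs where "subseq zs ys" "bs' = map f zs" using Cons.IH by blast
      then show ?thesis using True Cons by (intro exI[of _ "y # zs"]) auto
    next
      case False
      then have "subseq bs (map f ys)" using Cons.prems \<open>bs = b # bs'\<close> by auto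
      then obtain zs where "subseq zs ys" "bs = map f zs" using Cons.IH by blast
      then show ?thesis by (intro exI[of _ zs]) auto
    qed
  qed
qed

lemma subseq_sorted:
  "subseq xs ys \<Longrightarrow> sorted_wrt P ys \<Longrightarrow> sorted_wrt P xs"
proof (induction rule: list_emb.induct)
  case (list_emb_Cons2 x y xs ys)
  then show ?case using list_emb_set[of "(=)" xs ys] by fastforce
qed auto

theorem lemma7p1:
  fixes k l :: nat
  assumes "k \<ge> 2" and "l \<ge> 1"
  shows "(\<forall>bs. palindromic k l bs \<and> strictly_decreasing bs \<longrightarrow> subseq bs (Zprime k l))
    \<and> (\<forall>bs. subseq bs (Zprime k l) \<and> palindromic k l bs \<longrightarrow> strictly_decreasing bs)"
proof (intro conjI allI impI)
  fix bs assume A: "palindromic k l bs \<and> strictly_decreasing bs"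
  let ?d = "length bs"
  have bnd: "\<forall>b\<in>set bs. b < k ^ l" and pal: "\<forall>i<?d. rev_digits k l (bs ! i) = bs ! (?d - 1 - i)"
    using A unfolding palindromic_def by auto
  have eq: "bs = map (rev_digits k l) (rev bs)"
  proof (rule nth_equalityI)
    fix i assume "i < length bs"
    then have "rev_digits k l (bs ! (?d - 1 - i)) = bs ! (?d - 1 - (?d - 1 - i))"
      using pal by auto
    also have "?d - 1 - (?d - 1 - i) = i" using \<open>i < length bs\<close> by auto
    finally show "bs ! i = map (rev_digits k l) (rev bs) ! i"
      using \<open>i < length bs\<close> by (simp add: rev_nth)
  qed simp
  have "subseq (rev bs) [0..<k ^ l]"
    by (rule sorted_subset_imp_subseq) 
       (use A bnd in \<open>auto simp: strictly_decreasing_def sorted_wrt_rev\<close>)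
  then have "subseq (map (rev_digits k l) (rev bs)) (Zprime k l)"
    unfolding Zprime_def by (rule subseq_map)
  with eq show "subseq bs (Zprime k l)" by simp
next
  fix bs assume A: "subseq bs (Zprime k l) \<and> palindromic k l bs"
  let ?d = "length bs"
  have k0: "k > 0" using assms by simp
  obtain xs where xs: "subseq xs [0..<k ^ l]" "bs = map (rev_digits k l) xs"
    using subseq_map_inv[of bs "rev_digits k l" "[0..<k ^ l]"] A unfolding Zprime_def by auto
  have xlt: "\<forall>x\<in>set xs. x < k ^ l"
  proof
    fix x assume "x \<in> set xs"
    then obtain y where "y \<in> set [0..<k ^ l]" "x = y" by (rule list_emb_set[OF xs(1)])
    then show "x < k ^ l" by simp
  qed
  have srt: "sorted_wrt (<) xs" using subseq_sorted[OF xs(1)] by simp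
  have pal: "\<forall>i<?d. rev_digits k l (bs ! i) = bs ! (?d - 1 - i)"
    using A unfolding palindromic_def by auto
  have "xs = rev bs"
  proof (rule nth_equalityI)
    show "length xs = length (rev bs)" using xs by simp
    fix i assume i: "i < length xs"
    have "xs ! i < k ^ l" using xlt i by simp
    then have "xs ! i = rev_digits k l (bs ! i)"
      using i xs(2) rev_rev[OF k0, of "xs ! i"] by simp
    also have "\<dots> = bs ! (?d - 1 - i)" using pal i xs(2) by simp
    finally show "xs ! i = rev bs ! i" using i xs(2) by (simp add: rev_nth)
  qed
  then have "bs = rev xs" by simp
  then show "strictly_decreasing bs" using srt
    by (simp add: strictly_decreasing_def sorted_wrt_rev)
qed

end
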